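(* Let $(H_n)_{n\ge0}$ be the monic Hermite polynomials ($H_0=1$, $H_{-1}=0$, $H_n=xH_{n-1}-\tfrac{n-1}{2}H_{n-2}$), with coefficients $H_n(x)=\sum_{i=0}^n b_{n,i}x^i$ (convention $b_{m,m}=1$, $b_{m,l}=0$ for $l>m$). Let $(\gamma_m)_{m\ge1}$ be nonzero complex numbers with $\gamma_m\gamma_{m+1}=-\tfrac m2$ for all $m\ge1$. For integers $n\ge k\ge1$ and $0\le t\le k-1$ let $E_{k,n,t}$ be the determinant of the $(k-t-1)\times(k-t-1)$ matrix with $(\rho,c)$ entry $b_{n-k+t+1+c,\;n-k+t+\rho}$ ($E_{k,n,k-1}=1$), and define $$\Sigma_H(n,k)=\sum_{\substack{0\le j\le k-1\\ j \text{ even}}}\frac{(-1)^{j/2}}{2^j}\frac{(n-k+j)!}{(n-k)!\,(j/2)!}\sum_{r=1}^{k-j}\gamma_{n-k+j+1}\cdots\gamma_{n-k+j+r}\,E_{k,n,j+r-1}.$$ If $n$ is even, $k$ is odd and $n\ge k\ge3$, then $\Sigma_H(n,k)\neq0$.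
   Context: The hypothesis on $(\gamma_m)$ is the paper's standing assumption that $H_n^{(1)}=H_n+\gamma_nH_{n-1}$ is a Geronimus transformation of the Hermite polynomials normalized by $\gamma_2+\frac{1}{2\gamma_1}=0$, which yields $\gamma_m\gamma_{m+1}=-m/2$. *)

theory Defs
  imports "HOL-Computational_Algebra.Polynomial" "Jordan_Normal_Form.Determinant"
begin

fun hermite :: "nat \<Rightarrow> complex poly" where
  "hermite 0 = 1"
| "hermite (Suc 0) = [:0, 1:]"
| "hermite (Suc (Suc n)) = [:0, 1:] * hermite (Suc n) - smult (of_nat (n + 1) / 2) (hermite n)"

definition hb :: "nat \<Rightarrow> nat \<Rightarrow> complex" where
  "hb n i = coeff (hermite n) i"

text \<open>Jordan_Normal_Form matrices are 0-based,
  hence the shifts by one. The 0x0 determinant is 1.\<close>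
definition E_det :: "nat \<Rightarrow> nat \<Rightarrow> nat \<Rightarrow> complex" where
  "E_det k n t = det (mat (k - t - 1) (k - t - 1)
      (\<lambda>(i, j). hb (n - k + t + 1 + (j + 1)) (n - k + t + (i + 1))))"

definition Sigma_H :: "(nat \<Rightarrow> complex) \<Rightarrow> nat \<Rightarrow> nat \<Rightarrow> complex" where
  "Sigma_H \<gamma> n k =
     (\<Sum>j \<in> {j. j \<le> k - 1 \<and> even j}.
        ((-1) ^ (j div 2) / 2 ^ j) *
        (of_nat (fact (n - k + j)) / (of_nat (fact (n - k)) * of_nat (fact (j div 2)))) *
        (\<Sum>r = 1..k - j. (\<Prod>i = 1..r. \<gamma> (n - k + j + i)) * E_det k n (j + r - 1)))"

end

theory Submission
  imports Defs
begin

lemma coeff_x_mult: "coeff ([:0,1:] * (p::complex poly)) i = (if i = 0 then 0 else coeff p (i - 1))"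
  by (cases i) (auto simp: coeff_pCons)

lemma hermite_coeff: "(\<forall>i>n. coeff (hermite n) i = 0) \<and> coeff (hermite n) n = 1"
proof (induction n rule: hermite.induct)
  case 1 then show ?case by (auto simp: coeff_1)
next
  case 2 then show ?case by (auto simp: coeff_pCons split: nat.splits)
next
  case (3 n)
  then show ?case by (auto simp del: mult_pCons_left simp add: coeff_x_mult)
qed

lemma hb_zero: "i > n \<Longrightarrow> hb n i = 0" using hermite_coeff unfolding hb_def by blast
lemma hb_diag: "hb n n = 1" using hermite_coeff unfolding hb_def by blast


definition alpha :: "nat \<Rightarrow> nat \<Rightarrow> complex" where
  "alpha N l = (if l \<le> N \<and> even (N - l) then
     of_nat (fact N) / (of_nat (fact l) * of_nat (fact ((N - l) div 2)) * 4 ^ ((N - l) div 2)) else 0)"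

lemma alpha_eq: "N = l + 2 * m \<Longrightarrow> alpha N l = fact N / (fact l * fact m * 4 ^ m)"
  unfolding alpha_def by simp

lemma cnz: "(1 + of_nat m :: complex) \<noteq> 0"
  by (metis of_nat_Suc of_nat_eq_0_iff Suc_neq_Zero)

lemma complex_nz_Re[simp]: "Re x > 0 \<Longrightarrow> x \<noteq> 0"
  by auto

lemma alpha_zero: "l > N \<or> odd (N - l) \<Longrightarrow> alpha N l = 0"
  unfolding alpha_def by auto

lemma alpha_rec0: "alpha (Suc N) 0 = alpha N 1 / 2"
proof (cases "even N")
  case True
  then show ?thesis unfolding alpha_def by auto
next
  case False
  then obtain m where N: "N = 1 + 2 * m" by (metis add.commute oddE)
  have A: "alpha (Suc N) 0 = fact (Suc N) / (fact 0 * fact (Suc m) * 4 ^ Suc m)"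
    by (rule alpha_eq) (simp add: N)
  have B: "alpha N 1 = fact N / (fact 1 * fact m * 4 ^ m)"
    by (rule alpha_eq) (simp add: N)
  have f1: "(fact (Suc N) :: complex) = (2 * of_nat m + 2) * fact N"
    by (simp add: N)
  have f2: "(fact (Suc m) :: complex) = (of_nat m + 1) * fact m" by simp
  show ?thesis unfolding A B f1 f2 using cnz[of m]
    by (simp add: divide_simps; simp add: algebra_simps)
qed

lemma alpha_rec: "alpha (Suc N) (Suc j) = alpha N j + of_nat (j + 2) / 2 * alpha N (j + 2)"
proof (cases "j \<le> N \<and> even (N - j)")
  case False
  then show ?thesis unfolding alpha_def by auto
next
  case True
  then obtain m where N: "N = j + 2 * m" by (metis dvdE le_add_diff_inverse)
  have A: "alpha (Suc N) (Suc j) = fact (Suc N) / (fact (Suc j) * fact m * 4 ^ m)"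
    by (rule alpha_eq) (simp add: N)
  have B: "alpha N j = fact N / (fact j * fact m * 4 ^ m)"
    by (rule alpha_eq) (simp add: N)
  show ?thesis
  proof (cases m)
    case 0
    then show ?thesis unfolding A B using alpha_zero[of N "j+2"] cnz[of j] by (simp add: N)
  next
    case (Suc m')
    have C: "alpha N (j+2) = fact N / (fact (j+2) * fact m' * 4 ^ m')"
      by (rule alpha_eq) (simp add: N Suc)
    have f1: "(fact (Suc N) :: complex) = (of_nat j + 2 * of_nat m' + 3) * fact N"
      by (simp add: N Suc)
    have f2: "(fact (Suc j) :: complex) = (of_nat j + 1) * fact j" by simp
    have f3: "(fact (j+2) :: complex) = (of_nat j + 2) * (of_nat j + 1) * fact j"
      by (simp add: fact_Suc algebra_simps)
    have f4: "(fact m :: complex) = (of_nat m' + 1) * fact m'" by (simp add: Suc)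
    show ?thesis unfolding A B C f1 f2 f3 f4 Suc using cnz[of j] cnz[of "Suc j"] cnz[of m'] cnz[of "j+2*m'+2"]
      by (simp add: divide_simps; simp add: algebra_simps)
  qed
qed

lemma x_power_hermite: "[:0,1:] ^ N = (\<Sum>l\<le>N. smult (alpha N l) (hermite l))"
proof (induction N)
  case 0
  then show ?case by (simp add: alpha_def)
next
  case (Suc N)
  have xh: "[:0,1:] * hermite l = hermite (Suc l) + smult (of_nat l / 2) (hermite (l - 1))" for l
  proof (cases l)
    case 0 then show ?thesis by simp
  next
    case (Suc l') then show ?thesis by (cases l') (simp_all add: algebra_simps)
  qed
  have "[:0,1:] ^ Suc N = (\<Sum>l\<le>N. smult (alpha N l) ([:0,1:] * hermite l))"
    by (simp only: Suc power_Suc sum_distrib_left mult_smult_right)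
  also have "\<dots> = (\<Sum>l\<le>N. smult (alpha N l) (hermite (Suc l))) +
     (\<Sum>l\<le>N. smult (alpha N l * of_nat l / 2) (hermite (l - 1)))"
    by (simp only: xh smult_add_right sum.distrib smult_smult times_divide_eq_right)
  also have "(\<Sum>l\<le>N. smult (alpha N l) (hermite (Suc l))) = (\<Sum>l\<le>Suc N. smult (if l = 0 then 0 else alpha N (l - 1)) (hermite l))"
    by (subst sum.atMost_Suc_shift) simp
  also have "(\<Sum>l\<le>N. smult (alpha N l * of_nat l / 2) (hermite (l - 1))) =
      (\<Sum>l\<le>Suc N. smult (alpha N (l+1) * of_nat (l+1) / 2) (hermite l))"
  proof -
    have "(\<Sum>l\<le>N. smult (alpha N l * of_nat l / 2) (hermite (l - 1))) =
       (\<Sum>l\<le>Suc N. smult (alpha N l * of_nat l / 2) (hermite (l - 1)))"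
      by (simp add: alpha_zero)
    also have "\<dots> = (\<Sum>l\<le>N. smult (alpha N (l+1) * of_nat (l+1) / 2) (hermite l))"
      by (subst sum.atMost_Suc_shift) simp
    also have "\<dots> = (\<Sum>l\<le>Suc N. smult (alpha N (l+1) * of_nat (l+1) / 2) (hermite l))"
      by (simp add: alpha_zero)
    finally show ?thesis .
  qed
  also have "(\<Sum>l\<le>Suc N. smult (if l = 0 then 0 else alpha N (l - 1)) (hermite l)) +
      (\<Sum>l\<le>Suc N. smult (alpha N (l+1) * of_nat (l+1) / 2) (hermite l)) =
      (\<Sum>l\<le>Suc N. smult (alpha (Suc N) l) (hermite l))"
    unfolding sum.distrib[symmetric] smult_add_left[symmetric]
  proof (rule sum.cong[OF refl])
    fix l assume "l \<in> {..Suc N}"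
    show "smult ((if l = 0 then 0 else alpha N (l - 1)) + alpha N (l + 1) * of_nat (l + 1) / 2) (hermite l) =
          smult (alpha (Suc N) l) (hermite l)"
    proof (cases l)
      case 0 then show ?thesis by (simp add: alpha_rec0)
    next
      case (Suc l') then show ?thesis by (simp add: alpha_rec algebra_simps)
    qed
  qed
  finally show ?case .
qed


lemma alpha_hb: "(\<Sum>l\<le>N. alpha N l * hb l q) = (if q = N then 1 else 0)"
proof -
  have "coeff ([:0,1:] ^ N) q = (\<Sum>l\<le>N. alpha N l * hb l q)"
    unfolding x_power_hermite by (simp add: coeff_sum hb_def)
  moreover have "coeff ([:0,1:] ^ N :: complex poly) q = (if q = N then 1 else 0)"
    by (metis coeff_monom monom_altdef smult_1_left)
  ultimately show ?thesis by simp
qed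

definition Tm :: "nat \<Rightarrow> nat \<Rightarrow> complex mat" where
  "Tm a s = mat (Suc s) (Suc s) (\<lambda>(i,l). hb (a+1+i) (a+1+l))"
definition Am :: "nat \<Rightarrow> nat \<Rightarrow> complex mat" where
  "Am a s = mat (Suc s) (Suc s) (\<lambda>(i,l). alpha (a+1+i) (a+1+l))"

lemma Am_Tm: "Am a s * Tm a s = 1\<^sub>m (Suc s)"
proof (rule eq_matI)
  fix i q assume i: "i < dim_row (1\<^sub>m (Suc s))" and q: "q < dim_col (1\<^sub>m (Suc s))"
  hence i: "i < Suc s" and q: "q < Suc s" by auto
  define N where "N = a + 1 + i"
  define g where "g l' = alpha N l' * hb l' (a+1+q)" for l'
  have "(Am a s * Tm a s) $$ (i, q) = (\<Sum>l<Suc s. g (l + (a+1)))"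
    using i q unfolding Am_def Tm_def g_def N_def
    by (simp add: scalar_prod_def atLeast0LessThan algebra_simps)
  also have "\<dots> = sum g {a+1..<a+s+2}"
    using sum.shift_bounds_nat_ivl[of g 0 "a+1" "Suc s"] by (simp add: atLeast0LessThan algebra_simps)
  also have "\<dots> = sum g {0..<a+1} + sum g {a+1..<a+s+2}"
    unfolding g_def by (simp add: hb_zero)
  also have "\<dots> = sum g {0..<a+s+2}"
    by (rule sum.atLeastLessThan_concat) auto
  also have "\<dots> = sum g {..N}"
  proof (rule sum.mono_neutral_right)
    show "{..N} \<subseteq> {0..<a + s + 2}" using i unfolding N_def by auto
    show "\<forall>x\<in>{0..<a + s + 2} - {..N}. g x = 0" unfolding g_def by (auto simp: alpha_zero)
  qed auto
  also have "\<dots> = (if a+1+q = N then 1 else 0)" unfolding g_def by (rule alpha_hb)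
  also have "\<dots> = 1\<^sub>m (Suc s) $$ (i, q)" using i q unfolding N_def by auto
  finally show "(Am a s * Tm a s) $$ (i, q) = 1\<^sub>m (Suc s) $$ (i, q)" .
qed (auto simp: Am_def Tm_def)

lemma det_Tm: "det (Tm a s) = 1"
proof -
  have "det (Tm a s) = prod_list (diag_mat (Tm a s))"
    by (rule det_lower_triangular[of "Suc s"]) (auto simp: Tm_def hb_zero)
  also have "diag_mat (Tm a s) = map (\<lambda>i. 1) [0..<Suc s]"
    unfolding diag_mat_def by (rule map_cong) (auto simp: Tm_def hb_diag simp del: upt_Suc)
  finally show ?thesis by (simp add: map_replicate_const del: upt_Suc)
qed

lemma adj_Tm: "adj_mat (Tm a s) = Am a s"
proof -
  have T: "Tm a s \<in> carrier_mat (Suc s) (Suc s)" by (simp add: Tm_def)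
  have A: "Am a s \<in> carrier_mat (Suc s) (Suc s)" by (simp add: Am_def)
  have adj: "adj_mat (Tm a s) \<in> carrier_mat (Suc s) (Suc s)"
     "Tm a s * adj_mat (Tm a s) = 1\<^sub>m (Suc s)"
    using adj_mat[OF T] det_Tm by auto
  have "Am a s = Am a s * (Tm a s * adj_mat (Tm a s))" using adj A by simp
  also have "\<dots> = (Am a s * Tm a s) * adj_mat (Tm a s)"
    using A T adj by (simp add: assoc_mult_mat)
  also have "\<dots> = adj_mat (Tm a s)" using Am_Tm adj by simp
  finally show ?thesis by simp
qed

lemma E_matrix_det: "det (mat s s (\<lambda>(i, j). hb (a + 1 + (j + 1)) (a + (i + 1)))) = (-1) ^ s * alpha (a + 1 + s) (a + 1)"
proof -
  have M: "mat s s (\<lambda>(i, j). hb (a + 1 + (j + 1)) (a + (i + 1))) = transpose_mat (mat_delete (Tm a s) 0 s)"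
    by (rule eq_matI) (auto simp: mat_delete_def Tm_def algebra_simps)
  have D: "det (mat s s (\<lambda>(i, j). hb (a + 1 + (j + 1)) (a + (i + 1)))) = det (mat_delete (Tm a s) 0 s)"
    unfolding M by (rule det_transpose) (auto simp: mat_delete_def Tm_def)
  have "adj_mat (Tm a s) $$ (s, 0) = cofactor (Tm a s) 0 s"
    by (simp add: adj_mat_def Tm_def)
  hence "alpha (a + 1 + s) (a + 1) = (-1) ^ s * det (mat_delete (Tm a s) 0 s)"
    unfolding adj_Tm by (simp add: Am_def cofactor_def)
  hence "(-1) ^ s * alpha (a + 1 + s) (a + 1) = det (mat_delete (Tm a s) 0 s)"
    by (simp add: power_mult_distrib[symmetric])
  thus ?thesis using D by simp
qed


lemma chu_step:
  fixes a b :: complex and g :: "nat \<Rightarrow> complex"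
  shows "(\<Sum>u\<le>Suc K. (-1)^u * of_nat (Suc K choose u) * g u) =
         (\<Sum>u\<le>K. (-1)^u * of_nat (K choose u) * g u) - (\<Sum>u\<le>K. (-1)^u * of_nat (K choose u) * g (Suc u))"
proof -
  have "(\<Sum>u\<le>Suc K. (-1)^u * of_nat (Suc K choose u) * g u) =
        g 0 + (\<Sum>u\<le>K. (-1)^(Suc u) * of_nat (Suc K choose Suc u) * g (Suc u))"
    by (subst sum.atMost_Suc_shift) simp
  also have "\<dots> = g 0 + (\<Sum>u\<le>K. (-1)^(Suc u) * of_nat (K choose Suc u) * g (Suc u))
       - (\<Sum>u\<le>K. (-1)^u * of_nat (K choose u) * g (Suc u))"
  proof -
    have "(\<Sum>u\<le>K. (-1)^(Suc u) * of_nat (Suc K choose Suc u) * g (Suc u)) =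
      (\<Sum>u\<le>K. (-1)^(Suc u) * of_nat (K choose Suc u) * g (Suc u) - (-1)^u * of_nat (K choose u) * g (Suc u))"
      by (rule sum.cong) (simp_all add: algebra_simps)
    then show ?thesis by (simp add: sum_subtractf)
  qed
  also have "g 0 + (\<Sum>u\<le>K. (-1)^(Suc u) * of_nat (K choose Suc u) * g (Suc u)) =
        (\<Sum>u\<le>Suc K. (-1)^u * of_nat (K choose u) * g u)"
    by (subst sum.atMost_Suc_shift) simp
  also have "\<dots> = (\<Sum>u\<le>K. (-1)^u * of_nat (K choose u) * g u)"
    by simp
  finally show ?thesis .
qed

lemma chu_vandermonde:
  fixes a b :: complex
  assumes "\<And>i. a + of_nat i \<noteq> 0"
  shows "(\<Sum>u\<le>K. (-1)^u * of_nat (K choose u) * (pochhammer b u / pochhammer a u)) =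
         pochhammer (a - b) K / pochhammer a K"
  using assms
proof (induction K arbitrary: a b)
  case 0
  then show ?case by simp
next
  case (Suc K)
  have a0: "a \<noteq> 0" using Suc.prems[of 0] by simp
  have aK: "a + of_nat K \<noteq> 0" using Suc.prems by blast
  have pa: "pochhammer a K \<noteq> 0" using Suc.prems
    by (auto simp: pochhammer_eq_0_iff) (metis add_eq_0_iff)
  have pa1: "pochhammer (a+1) K \<noteq> 0" using Suc.prems
    apply (auto simp: pochhammer_eq_0_iff)
    by (metis add.assoc add_eq_0_iff of_nat_Suc add.commute)
  note IH1 = Suc.IH[of a b, OF Suc.prems]
  have pr: "\<And>i. a + 1 + of_nat i \<noteq> 0" using Suc.prems
    by (metis add.assoc add.commute of_nat_Suc)
  note IH2 = Suc.IH[of "a+1" "b+1", OF pr]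
  have gs: "pochhammer b (Suc u) / pochhammer a (Suc u) = b / a * (pochhammer (b+1) u / pochhammer (a+1) u)" for u
    by (simp add: pochhammer_rec)
  have "(\<Sum>u\<le>Suc K. (-1)^u * of_nat (Suc K choose u) * (pochhammer b u / pochhammer a u)) =
     pochhammer (a - b) K / pochhammer a K - b / a * (pochhammer (a - b) K / pochhammer (a + 1) K)"
  proof -
    have IH2': "(\<Sum>u\<le>K. (-1)^u * of_nat (K choose u) * (pochhammer (b+1) u / pochhammer (a+1) u)) =
         pochhammer (a - b) K / pochhammer (a+1) K" using IH2 by simp
    have "(\<Sum>u\<le>K. (-1)^u * of_nat (K choose u) * (b / a * (pochhammer (b+1) u / pochhammer (a+1) u))) =
       b / a * (\<Sum>u\<le>K. (-1)^u * of_nat (K choose u) * (pochhammer (b+1) u / pochhammer (a+1) u))"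
      by (simp add: sum_distrib_left mult_ac)
    then show ?thesis unfolding chu_step gs IH1 IH2' by simp
  qed
  also have "\<dots> = pochhammer (a - b) (Suc K) / pochhammer a (Suc K)"
  proof -
    have e1: "pochhammer a (Suc K) = a * pochhammer (a+1) K" by (simp add: pochhammer_rec)
    have e2: "pochhammer a (Suc K) = (a + of_nat K) * pochhammer a K" by (simp add: pochhammer_rec')
    have e3: "pochhammer (a-b) (Suc K) = (a - b + of_nat K) * pochhammer (a-b) K" by (simp add: pochhammer_rec')
    have Y: "a * pochhammer (a+1) K = (a + of_nat K) * pochhammer a K" using e1 e2 by simp
    have s1: "b / a * (pochhammer (a - b) K / pochhammer (a + 1) K) = b * pochhammer (a - b) K / ((a + of_nat K) * pochhammer a K)"
      by (simp add: Y[symmetric])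
    have s2: "pochhammer (a - b) K / pochhammer a K = (a + of_nat K) * pochhammer (a - b) K / ((a + of_nat K) * pochhammer a K)"
      using aK by simp
    show ?thesis unfolding s1 s2 e3 e2 by (simp add: diff_divide_distrib[symmetric] algebra_simps)
  qed
  finally show ?case .
qed


lemma E_det_eq: assumes "t \<le> k - 1" "k \<le> n" "k \<ge> 1"
  shows "E_det k n t = (-1) ^ (k - t - 1) * alpha n (n - k + t + 1)"
proof -
  have "E_det k n t = (-1) ^ (k - t - 1) * alpha (n - k + t + 1 + (k - t - 1)) (n - k + t + 1)"
    unfolding E_det_def by (rule E_matrix_det)
  also have "n - k + t + 1 + (k - t - 1) = n" using assms by simp
  finally show ?thesis .
qed

lemma I_formula:
  fixes \<gamma> :: "nat \<Rightarrow> complex"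
  assumes rel: "\<And>m. m \<ge> 1 \<Longrightarrow> \<gamma> m * \<gamma> (m + 1) = - (of_nat m / 2)"
    and n: "n \<ge> 1"
  shows "d \<le> n \<Longrightarrow> (\<Sum>r=1..d. (\<Prod>i=1..r. \<gamma> (n - d + i)) * ((-1) ^ (d - r) * alpha n (n - d + r))) =
     (if odd d then \<gamma> (n - d + 1) * alpha (n - 1) (n - d) else - (of_nat (n - d + 1) / 2) * alpha (n - 1) (n - d + 1))"
proof (induction d)
  case 0
  then show ?case by (simp add: alpha_zero)
next
  case (Suc d)
  then obtain m where nm: "n = m + Suc d" by (metis add.commute le_iff_add)
  have e1: "n - Suc d = m" "n - d = Suc m" using nm by auto
  let ?f = "\<lambda>r. (\<Prod>i=1..r. \<gamma> (m + i)) * ((-1) ^ (Suc d - r) * alpha n (m + r))"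
  have "(\<Sum>r=1..Suc d. ?f r) = ?f 1 + (\<Sum>r=Suc 1..Suc d. ?f r)"
    by (rule sum.atLeast_Suc_atMost) simp
  also have "(\<Sum>r=Suc 1..Suc d. ?f r) = (\<Sum>r=1..d. ?f (Suc r))"
    by (rule sum.shift_bounds_cl_Suc_ivl)
  also have "\<dots> = \<gamma> (Suc m) * (\<Sum>r=1..d. (\<Prod>i=1..r. \<gamma> (Suc m + i)) * ((-1) ^ (d - r) * alpha n (Suc m + r)))"
  proof -
    have fS: "?f (Suc r) = \<gamma> (Suc m) * ((\<Prod>i=1..r. \<gamma> (Suc m + i)) * ((-1) ^ (d - r) * alpha n (Suc m + r)))" for r
    proof -
      have "(\<Prod>i=1..Suc r. \<gamma> (m + i)) = \<gamma> (m + 1) * (\<Prod>i=Suc 1..Suc r. \<gamma> (m + i))"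
        by (rule prod.atLeast_Suc_atMost) simp
      also have "(\<Prod>i=Suc 1..Suc r. \<gamma> (m + i)) = (\<Prod>i=1..r. \<gamma> (m + Suc i))"
        by (rule prod.shift_bounds_cl_Suc_ivl)
      finally show ?thesis by simp
    qed
    show ?thesis unfolding sum_distrib_left by (rule sum.cong[OF refl]) (rule fS)
  qed
  also have "(\<Sum>r=1..d. (\<Prod>i=1..r. \<gamma> (Suc m + i)) * ((-1) ^ (d - r) * alpha n (Suc m + r))) =
     (if odd d then \<gamma> (Suc m + 1) * alpha (n - 1) (Suc m) else - (of_nat (Suc m + 1) / 2) * alpha (n - 1) (Suc m + 1))"
    using Suc.IH Suc.prems unfolding e1 by simp
  finally have S: "(\<Sum>r=1..Suc d. ?f r) = ?f 1 + \<gamma> (Suc m) * (if odd d then \<gamma> (Suc m + 1) * alpha (n - 1) (Suc m) else - (of_nat (Suc m + 1) / 2) * alpha (n - 1) (Suc m + 1))" .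
  have n1: "n = Suc (n - 1)" using n by simp
  show ?case
  proof (cases "odd d")
    case True
    have a0: "alpha n (Suc m) = 0" using True by (intro alpha_zero) (simp add: nm)
    have rr: "\<gamma> (Suc m) * \<gamma> (Suc m + 1) = - (of_nat (Suc m) / 2)" using rel[of "Suc m"] by simp
    have X: "\<gamma> (Suc m) * (\<gamma> (Suc m + 1) * X) = - (of_nat (Suc m) / 2) * X" for X
      using rr by (simp only: mult.assoc[symmetric])
    show ?thesis unfolding e1 S using True a0 X by simp
  next
    case False
    have ar: "alpha n (Suc m) = alpha (n - 1) m + of_nat (m + 2) / 2 * alpha (n - 1) (m + 2)"
      using alpha_rec[of "n - 1" m] n1 by simp
    have "?f 1 = \<gamma> (Suc m) * alpha n (Suc m)" using False by simp
    then show ?thesis unfolding e1 S using False ar by (simp add: algebra_simps)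
  qed
qed

lemma gamma_shift:
  fixes \<gamma> :: "nat \<Rightarrow> complex"
  assumes rel: "\<And>m. m \<ge> 1 \<Longrightarrow> \<gamma> m * \<gamma> (m + 1) = - (of_nat m / 2)"
  shows "\<gamma> (p + 1 + 2 * u) = \<gamma> (p + 1) * (pochhammer ((of_nat p + 2) / 2) u / pochhammer ((of_nat p + 1) / 2) u)"
proof (induction u)
  case 0
  then show ?case by simp
next
  case (Suc u)
  define m where "m = p + 1 + 2 * u"
  have r1: "\<gamma> m * \<gamma> (m + 1) = - (of_nat m / 2)" using rel[of m] by (simp add: m_def)
  have r2: "\<gamma> (m + 1) * \<gamma> (m + 2) = - (of_nat (m + 1) / 2)" using rel[of "m+1"] by (simp add: add.assoc)
  have m0: "(of_nat m :: complex) \<noteq> 0" by (simp add: m_def)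
  have "\<gamma> (m + 2) * (\<gamma> m * \<gamma> (m + 1)) = \<gamma> m * (\<gamma> (m + 1) * \<gamma> (m + 2))" by (simp add: mult_ac)
  hence "\<gamma> (m + 2) * of_nat m = \<gamma> m * of_nat (m + 1)" unfolding r1 r2 by simp
  hence g2: "\<gamma> (m + 2) = \<gamma> m * (of_nat (m + 1) / of_nat m)" using m0 by (simp add: field_simps)
  have pa: "pochhammer ((of_nat p + 1) / 2) u \<noteq> (0::complex)"
    by (auto simp: pochhammer_eq_0_iff dest!: arg_cong[where f=Re])
  have pa2: "(of_nat p + 1) / 2 + of_nat u \<noteq> (0::complex)"
  proof
    assume "(of_nat p + 1) / 2 + of_nat u = (0::complex)"
    hence "(real p + 1) / 2 + real u = 0" by (auto dest!: arg_cong[where f=Re] simp: Re_divide_numeral)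
    moreover have "(real p + 1) / 2 + real u > 0" by (simp add: add_pos_nonneg)
    ultimately show False by simp
  qed
  have q: "((of_nat p + 2) / 2 + of_nat u) / ((of_nat p + 1) / 2 + of_nat u) = (of_nat (m + 1) / of_nat m :: complex)"
    unfolding m_def using pa2 by (simp add: field_simps)
  have "\<gamma> (p + 1 + 2 * Suc u) = \<gamma> (m + 2)" by (simp add: m_def)
  also have "\<dots> = \<gamma> (p + 1) * (pochhammer ((of_nat p + 2) / 2) u / pochhammer ((of_nat p + 1) / 2) u) *
       (((of_nat p + 2) / 2 + of_nat u) / ((of_nat p + 1) / 2 + of_nat u))"
    unfolding g2 q using Suc.IH by (simp add: m_def)
  also have "\<dots> = \<gamma> (p + 1) * (pochhammer ((of_nat p + 2) / 2) (Suc u) / pochhammer ((of_nat p + 1) / 2) (Suc u))"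
    using pa pa2 by (simp add: pochhammer_rec' field_simps)
  finally show ?case .
qed


lemma half_nz: "(of_nat p + 1) / 2 + of_nat u \<noteq> (0::complex)"
proof
  assume "(of_nat p + 1) / 2 + of_nat u = (0::complex)"
  hence "(real p + 1) / 2 + real u = 0" by (auto dest!: arg_cong[where f=Re] simp: Re_divide_numeral)
  moreover have "(real p + 1) / 2 + real u > 0" by (simp add: add_pos_nonneg)
  ultimately show False by simp
qed

lemma poch_a_nz: "pochhammer ((of_nat p + 1) / 2) K \<noteq> (0::complex)"
  using half_nz[of p] by (auto simp: pochhammer_eq_0_iff) (metis add_eq_0_iff)

lemma poch_half_nz: "pochhammer (-1/2) K \<noteq> (0::complex)"
proof
  assume "pochhammer (-1/2) K = (0::complex)"
  then obtain k where "(-1/2 :: complex) = - of_nat k" by (auto simp: pochhammer_eq_0_iff)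
  hence "(of_nat (2 * k) :: complex) = of_nat 1" by (simp add: field_simps)
  hence "2 * k = 1" using of_nat_eq_iff by blast
  thus False by presburger
qed

theorem theorem5:
  fixes \<gamma> :: "nat \<Rightarrow> complex" and n k :: nat
  assumes nonzero: "\<And>m. m \<ge> 1 \<Longrightarrow> \<gamma> m \<noteq> 0"
    and rel: "\<And>m. m \<ge> 1 \<Longrightarrow> \<gamma> m * \<gamma> (m + 1) = - (of_nat m / 2)"
    and "even n" and "odd k" and "k \<ge> 3" and "n \<ge> k"
  shows "Sigma_H \<gamma> n k \<noteq> 0"
proof -
  note kodd = \<open>odd k\<close> and k3 = \<open>k \<ge> 3\<close> and nk = \<open>n \<ge> k\<close>
  define K where "K = k div 2"
  define p where "p = n - k"
  have kK: "k = 2 * K + 1" using kodd unfolding K_def by presburger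
  have n1: "n - 1 = p + 2 * K" using nk kK unfolding p_def by simp
  define J where "J = {j. j \<le> k - 1 \<and> even j}"
  define c where "c j = ((-1) ^ (j div 2) / 2 ^ j) *
        (of_nat (fact (n - k + j)) / (of_nat (fact (n - k)) * of_nat (fact (j div 2))) :: complex)" for j
  have inner: "(\<Sum>r = 1..k - j. (\<Prod>i = 1..r. \<gamma> (n - k + j + i)) * E_det k n (j + r - 1)) =
      \<gamma> (p + j + 1) * alpha (n - 1) (p + j)" if j: "j \<in> J" for j
  proof -
    have jk: "j \<le> k - 1" "even j" using j unfolding J_def by auto
    define d where "d = k - j"
    have dn: "d \<le> n" "odd d" using jk nk kodd unfolding d_def by auto
    have nd: "n - d = n - k + j" using jk nk unfolding d_def by simp
    have "(\<Sum>r = 1..k - j. (\<Prod>i = 1..r. \<gamma> (n - k + j + i)) * E_det k n (j + r - 1)) =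
        (\<Sum>r=1..d. (\<Prod>i=1..r. \<gamma> (n - d + i)) * ((-1) ^ (d - r) * alpha n (n - d + r)))"
      unfolding d_def[symmetric]
    proof (rule sum.cong[OF refl])
      fix r assume r: "r \<in> {1..d}"
      have "E_det k n (j + r - 1) = (-1) ^ (k - (j + r - 1) - 1) * alpha n (n - k + (j + r - 1) + 1)"
        by (rule E_det_eq) (use r jk nk k3 in \<open>auto simp: d_def\<close>)
      also have "k - (j + r - 1) - 1 = d - r" using r jk unfolding d_def by auto
      also have "n - k + (j + r - 1) + 1 = n - d + r" using r jk nk unfolding d_def by auto
      finally show "(\<Prod>i = 1..r. \<gamma> (n - k + j + i)) * E_det k n (j + r - 1) =
          (\<Prod>i=1..r. \<gamma> (n - d + i)) * ((-1) ^ (d - r) * alpha n (n - d + r))"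
        unfolding nd by simp
    qed
    also have "\<dots> = \<gamma> (n - d + 1) * alpha (n - 1) (n - d)"
      using I_formula[of \<gamma> n d, OF rel] dn nk k3 by simp
    finally show ?thesis unfolding nd p_def by simp
  qed
  have S1: "Sigma_H \<gamma> n k = (\<Sum>j\<in>J. c j * (\<gamma> (p + j + 1) * alpha (n - 1) (p + j)))"
    unfolding Sigma_H_def J_def[symmetric] c_def[symmetric]
    by (rule sum.cong[OF refl]) (simp only: inner)
  have JK: "J = (\<lambda>u. 2 * u) ` {..K}"
  proof
    show "J \<subseteq> (\<lambda>u. 2 * u) ` {..K}"
    proof
      fix j assume "j \<in> J"
      hence "j \<le> 2 * K" "even j" unfolding J_def using kK by auto
      thus "j \<in> (\<lambda>u. 2 * u) ` {..K}" by (auto elim!: evenE)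
    qed
    show "(\<lambda>u. 2 * u) ` {..K} \<subseteq> J" unfolding J_def using kK by auto
  qed
  define a :: complex where "a = (of_nat p + 1) / 2"
  define b :: complex where "b = (of_nat p + 2) / 2"
  define C :: complex where "C = fact (n - 1) / (fact p * fact K * 4 ^ K)"
  have termu: "c (2 * u) * (\<gamma> (p + 2 * u + 1) * alpha (n - 1) (p + 2 * u)) =
       \<gamma> (p + 1) * C * ((-1) ^ u * of_nat (K choose u) * (pochhammer b u / pochhammer a u))"
    if u: "u \<le> K" for u
  proof -
    have g: "\<gamma> (p + 2 * u + 1) = \<gamma> (p + 1) * (pochhammer b u / pochhammer a u)"
      using gamma_shift[of \<gamma> p u, OF rel] unfolding a_def b_def by (simp add: add_ac)
    have al: "alpha (n - 1) (p + 2 * u) = fact (n - 1) / (fact (p + 2 * u) * fact (K - u) * 4 ^ (K - u))"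
      by (rule alpha_eq) (use n1 u in simp)
    have cc: "c (2 * u) = (-1) ^ u / 4 ^ u * (fact (p + 2 * u) / (fact p * fact u))"
      unfolding c_def p_def by (simp add: power_mult)
    have bin: "of_nat (K choose u) = (fact K / (fact u * fact (K - u)) :: complex)"
      using binomial_fact[OF u] by simp
    have p4: "(4::complex) ^ K = 4 ^ u * 4 ^ (K - u)" using u by (simp add: power_add[symmetric])
    show ?thesis unfolding g al cc bin C_def p4
      by (simp add: field_simps)
  qed
  have S2: "Sigma_H \<gamma> n k = \<gamma> (p + 1) * C * (\<Sum>u\<le>K. (-1) ^ u * of_nat (K choose u) * (pochhammer b u / pochhammer a u))"
  proof -
    have "Sigma_H \<gamma> n k = (\<Sum>u\<le>K. c (2 * u) * (\<gamma> (p + 2 * u + 1) * alpha (n - 1) (p + 2 * u)))"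
      unfolding S1 JK by (subst sum.reindex) (auto simp: inj_on_def)
    also have "\<dots> = (\<Sum>u\<le>K. \<gamma> (p + 1) * C * ((-1) ^ u * of_nat (K choose u) * (pochhammer b u / pochhammer a u)))"
      by (rule sum.cong[OF refl]) (simp only: termu atMost_iff)
    finally show ?thesis by (simp only: sum_distrib_left)
  qed
  also have "(\<Sum>u\<le>K. (-1) ^ u * of_nat (K choose u) * (pochhammer b u / pochhammer a u)) = pochhammer (a - b) K / pochhammer a K"
    by (rule chu_vandermonde) (simp add: a_def half_nz)
  also have "a - b = -1/2" unfolding a_def b_def by (simp add: field_simps)
  finally have S3: "Sigma_H \<gamma> n k = \<gamma> (p + 1) * C * (pochhammer (-1/2) K / pochhammer a K)" .
  have "\<gamma> (p + 1) \<noteq> 0" by (rule nonzero) simp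
  moreover have "C \<noteq> 0" unfolding C_def by simp
  moreover have "pochhammer (-1/2) K \<noteq> (0::complex)" by (rule poch_half_nz)
  moreover have "pochhammer a K \<noteq> 0" unfolding a_def by (rule poch_a_nz)
  ultimately show ?thesis unfolding S3 by simp
qed

end
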